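(* Let $G$ be a circle of circumference $1$, let $\mathbf{x}\in G^n$ be such that the agents are not on one semicircle, and let $i\in N$, $x_i'\in G$ be such that the agents in $\mathbf{x}'=(x_i',\mathbf{x}_{-i})$ are not on one semicircle. Then $\mathrm{cost}(\mathrm{rc}(\mathbf{x}),x_i)\le\mathrm{cost}(\mathrm{rc}(\mathbf{x}'),x_i)$.
   Context: $d(x,y)$ is the shorter-arc length; $\hat x$ the antipode of $x$; $\mathrm{cost}(P,x_i)=\mathbb{E}_{y\sim P}[d(x_i,y)]$. Agents are on one semicircle if all locations lie in some closed arc of length $1/2$. RC: the antipodal points $\hat{x}_1,\dots,\hat{x}_n$ partition $G$ into arcs between cyclically consecutive antipodal points; $\mathrm{rc}$ returns the midpoint of each such arc with probability equal to its length. *)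

theory Defs
  imports "HOL-Probability.Probability"
begin

text \<open>The circle G of circumference 1 is represented by the reals modulo 1:
  a real number t denotes the point frac t in [0,1).\<close>

definition circ_dist :: "real \<Rightarrow> real \<Rightarrow> real" where
  "circ_dist x y = min (frac (x - y)) (1 - frac (x - y))"

definition antipode :: "real \<Rightarrow> real" where
  "antipode x = frac (x + 1/2)"

definition on_semicircle :: "nat \<Rightarrow> (nat \<Rightarrow> real) \<Rightarrow> bool" where
  "on_semicircle n x \<longleftrightarrow> (\<exists>c. \<forall>i<n. frac (x i - c) \<le> 1/2)"

text \<open>Distinct antipodal points in increasing order in [0,1), closed up cyclically
  by appending the first one plus 1.\<close>
definition rc_points :: "nat \<Rightarrow> (nat \<Rightarrow> real) \<Rightarrow> real list" where
  "rc_points n x = (let L = sorted_list_of_set ((\<lambda>i. antipode (x i)) ` {..<n})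
                    in L @ [hd L + 1])"

text \<open>Arcs between cyclically consecutive antipodal points:
  (midpoint, length) pairs.\<close>
definition rc_arcs :: "nat \<Rightarrow> (nat \<Rightarrow> real) \<Rightarrow> (real \<times> real) list" where
  "rc_arcs n x = (let P = rc_points n x in
     map (\<lambda>j. (frac ((P ! j + P ! (j+1)) / 2), P ! (j+1) - P ! j)) [0..<length P - 1])"

text \<open>The RC mechanism: midpoint of each arc with probability equal to its length.\<close>
definition rc :: "nat \<Rightarrow> (nat \<Rightarrow> real) \<Rightarrow> real pmf" where
  "rc n x = pmf_of_list (rc_arcs n x)"

definition cost :: "real pmf \<Rightarrow> real \<Rightarrow> real" where
  "cost P z = measure_pmf.expectation P (\<lambda>y. circ_dist z y)"

end

theory Submission imports Defs begin


definition hh :: "real \<Rightarrow> real" where "hh w = min (frac w) (1 - frac w)"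
definition KK :: "real \<Rightarrow> real" where
  "KK t = (if t \<le> 1/2 then t^2/2 else 1/4 - (1-t)^2/2)"
definition HH :: "real \<Rightarrow> real" where "HH w = real_of_int \<lfloor>w\<rfloor> / 4 + KK (frac w)"
definition EE :: "real \<Rightarrow> real \<Rightarrow> real" where
  "EE u v = (v - u) * hh ((u+v)/2) - (HH v - HH u)"

lemma hh_shift: "hh (w + of_int k) = hh w" by (simp add: hh_def)
lemma HH_shift: "HH (w + of_int k) = HH w + of_int k / 4"
  by (simp add: HH_def floor_add_int[symmetric] add_divide_distrib)
lemma EE_shift: "EE (u + of_int k) (v + of_int k) = EE u v"
proof -
  have "(u + of_int k + (v + of_int k)) / 2 = (u+v)/2 + of_int k" by simp
  then have "hh ((u + of_int k + (v + of_int k)) / 2) = hh ((u+v)/2)" by (subst \<open>_ = _\<close>) (rule hh_shift)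
  then show ?thesis unfolding EE_def HH_shift by simp
qed

lemma frac_simple: "of_int m \<le> x \<Longrightarrow> x < of_int m + 1 \<Longrightarrow> frac x = x - of_int m \<and> \<lfloor>x\<rfloor> = m"
  by (simp add: frac_def floor_unique)

lemma L1_base:
  assumes u: "0 \<le> u" "u < 1" and uv: "u < of_int m" "of_int m < v" "v - u < 1/2"
  shows "EE u v = - ((min (of_int m - u) (v - of_int m))^2)"
proof -
  have "real_of_int 0 < of_int m" "of_int m < real_of_int 2" using uv u by auto
  then have m: "m = 1" by simp
  then have m1: "real_of_int m = 1" by simp
  have fu: "frac u = u" "\<lfloor>u\<rfloor> = 0" using frac_simple[of 0 u] u by auto
  have fv: "frac v = v - 1" "\<lfloor>v\<rfloor> = 1" using frac_simple[of 1 v] u uv m by auto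
  have hm: "hh ((u+v)/2) = \<bar>1 - (u+v)/2\<bar>"
  proof (cases "(u+v)/2 < 1")
    case True
    then have f: "frac ((u+v)/2) = (u+v)/2" using frac_simple[of 0 "(u+v)/2"] u uv m by auto
    have mn: "min ((u+v)/2) (1 - (u+v)/2) = 1 - (u+v)/2" using True u uv m1 by (intro min_absorb2) argo
    show ?thesis unfolding hh_def f mn using True by simp
  next
    case False
    then have f: "frac ((u+v)/2) = (u+v)/2 - 1" using frac_simple[of 1 "(u+v)/2"] u uv m by auto
    have mn: "min ((u+v)/2 - 1) (1 - ((u+v)/2 - 1)) = (u+v)/2 - 1" using False u uv m1 by (intro min_absorb1) argo
    show ?thesis unfolding hh_def f mn using False by simp
  qed
  have eq: "EE u v = (v - u) * \<bar>1 - (u + v) / 2\<bar> - (1/4 + (v - 1)^2 / 2 - (1 / 4 - (1 - u)^2 / 2))"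
    unfolding EE_def hm HH_def fu fv KK_def using u uv m by simp
  have "u > 1/2" "v < 3/2" "v > 1" using uv m1 by auto
  show ?thesis
  proof (cases "1 - u \<le> v - 1")
    case True
    have "\<bar>1 - (u + v) / 2\<bar> = (v - 1 - (1 - u))/2" using True by argo
    moreover have "min (1 - u) (v - 1) = 1 - u" using True by (intro min_absorb1) argo
    ultimately show ?thesis unfolding eq m1 by (simp add: power2_eq_square field_simps)
  next
    case False
    have "\<bar>1 - (u + v) / 2\<bar> = ((1 - u) - (v - 1))/2" using False by argo
    moreover have "min (1 - u) (v - 1) = v - 1" using False by (intro min_absorb2) argo
    ultimately show ?thesis unfolding eq m1 by (simp add: power2_eq_square field_simps)
  qed
qed

lemma base_noint:
  assumes u: "0 \<le> u" "u < 1" and uv: "u < v" "\<forall>m::int. \<not> (u < of_int m \<and> of_int m < v)"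
  shows "EE u v = (if u < 1/2 \<and> 1/2 < v then (min (1/2 - u) (v - 1/2))^2 else 0)"
proof -
  have v1: "v \<le> 1" using uv(2)[rule_format, of 1] u uv by auto
  have fu: "frac u = u" "\<lfloor>u\<rfloor> = 0" using frac_simple[of 0 u] u by auto
  have HHv: "HH v = KK v"
  proof (cases "v < 1")
    case True then show ?thesis using frac_simple[of 0 v] u uv by (simp add: HH_def)
  next
    case False then have "v = 1" using v1 by simp
    then show ?thesis by (simp add: HH_def KK_def)
  qed
  have hm: "hh ((u+v)/2) = min ((u+v)/2) (1 - (u+v)/2)"
    using frac_simple[of 0 "(u+v)/2"] u uv v1 by (auto simp: hh_def)
  have eq: "EE u v = (v - u) * min ((u + v) / 2) (1 - (u + v) / 2) -
     ((if v \<le> 1 / 2 then v^2 / 2 else 1 / 4 - (1 - v)^2 / 2) -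
       (if u \<le> 1 / 2 then u^2 / 2 else 1 / 4 - (1 - u)^2 / 2))"
    unfolding EE_def hm HHv unfolding HH_def fu KK_def by simp
  consider "v \<le> 1/2" | "1/2 \<le> u" | "u < 1/2" "1/2 < v" by linarith
  then show ?thesis
  proof cases
    case 1
    then have "min ((u + v) / 2) (1 - (u + v) / 2) = (u+v)/2" using 1 uv(1) by (intro min_absorb1) argo
    then show ?thesis using 1 uv unfolding eq by (simp add: power2_eq_square field_simps)
  next
    case 2
    then have "min ((u + v) / 2) (1 - (u + v) / 2) = 1 - (u+v)/2" using 2 uv(1) by (intro min_absorb2) argo
    show ?thesis
    proof (cases "u = 1/2")
      case True
      show ?thesis unfolding eq using \<open>min _ _ = _\<close> 2 uv unfolding True by (simp add: power2_eq_square field_simps)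
    next
      case False
      then show ?thesis using 2 uv \<open>min _ _ = _\<close> unfolding eq by (simp add: power2_eq_square field_simps)
    qed
  next
    case 3
    show ?thesis
    proof (cases "1/2 - u \<le> v - 1/2")
      case True
      have mn: "min ((u + v) / 2) (1 - (u + v) / 2) = 1 - (u+v)/2" "min (1/2 - u) (v - 1/2) = 1/2 - u" using True 3 uv(1)
        by (intro min_absorb2 min_absorb1; argo)+
      show ?thesis using 3 uv unfolding eq mn by (simp add: power2_eq_square field_simps)
    next
      case False
      have mn: "min ((u + v) / 2) (1 - (u + v) / 2) = (u+v)/2" "min (1/2 - u) (v - 1/2) = v - 1/2" using False 3 uv(1)
        by (intro min_absorb1 min_absorb2; argo)+
      show ?thesis using 3 uv unfolding eq mn by (simp add: power2_eq_square field_simps)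
    qed
  qed
qed

lemma EE_shift': "EE u v = EE (u - of_int k) (v - of_int k)"
  using EE_shift[of "u - of_int k" k "v - of_int k"] by simp

lemma L1_gen:
  assumes "u < of_int m" "of_int m < v" "v - u < 1/2"
  shows "EE u v = - ((min (of_int m - u) (v - of_int m))^2)"
proof -
  define k where "k = \<lfloor>u\<rfloor>"
  have "0 \<le> u - of_int k" "u - of_int k < 1" unfolding k_def by linarith+
  moreover have "u - of_int k < of_int (m - k)" "of_int (m - k) < v - of_int k" "(v - of_int k) - (u - of_int k) < 1/2"
    using assms by auto
  ultimately have "EE (u - of_int k) (v - of_int k) = - ((min (of_int (m-k) - (u - of_int k)) (v - of_int k - of_int (m-k)))^2)"
    by (rule L1_base)
  then show ?thesis using EE_shift'[of u v k] by simp
qed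

lemma noint_gen:
  assumes "u < v" "\<forall>m::int. \<not> (u < of_int m \<and> of_int m < v)"
  shows "EE u v \<ge> 0"
    "(\<forall>m::int. \<not> (u < of_int m + 1/2 \<and> of_int m + 1/2 < v)) \<Longrightarrow> EE u v = 0"
proof -
  define k where "k = \<lfloor>u\<rfloor>"
  have u: "0 \<le> u - of_int k" "u - of_int k < 1" unfolding k_def by linarith+
  have nm: "\<forall>m::int. \<not> (u - of_int k < of_int m \<and> of_int m < v - of_int k)"
  proof (intro allI notI)
    fix m :: int assume "u - of_int k < of_int m \<and> of_int m < v - of_int k"
    then show False using assms(2)[rule_format, of "m + k"] by auto
  qed
  have e: "EE u v = (if u - of_int k < 1/2 \<and> 1/2 < v - of_int k
      then (min (1/2 - (u - of_int k)) (v - of_int k - 1/2))^2 else 0)"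
    using base_noint[OF u _ nm] assms(1) EE_shift'[of u v k] by simp
  then show "EE u v \<ge> 0" by simp
  assume h: "\<forall>m::int. \<not> (u < of_int m + 1/2 \<and> of_int m + 1/2 < v)"
  have c: "\<not> (u - of_int k < 1/2 \<and> 1/2 < v - of_int k)" using h[rule_format, of k] by auto
  show "EE u v = 0" unfolding e if_not_P[OF c] by (rule refl)
qed




lemma exp_pmf_of_list:
  assumes wf: "pmf_of_list_wf xs"
  shows "measure_pmf.expectation (pmf_of_list xs) f = (\<Sum>k<length xs. snd (xs!k) * f (fst (xs!k)))"
proof -
  let ?A = "set (map fst xs)"
  have "measure_pmf.expectation (pmf_of_list xs) f = (\<Sum>a\<in>?A. f a * pmf (pmf_of_list xs) a)"
    using set_pmf_of_list[OF wf] by (intro integral_measure_pmf_real) auto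
  also have "\<dots> = (\<Sum>a\<in>?A. f a * (\<Sum>k<length xs. if fst (xs!k) = a then snd (xs!k) else 0))"
    by (intro sum.cong refl arg_cong2[where f="(*)"], subst pmf_pmf_of_list[OF wf], subst sum_list_map_filter', subst sum_list_sum_nth)
       (simp add: atLeast0LessThan)
  also have "\<dots> = (\<Sum>a\<in>?A. (\<Sum>k<length xs. if fst (xs!k) = a then snd (xs!k) * f (fst (xs!k)) else 0))"
    by (intro sum.cong refl) (auto simp: sum_distrib_left intro!: sum.cong)
  also have "\<dots> = (\<Sum>k<length xs. (\<Sum>a\<in>?A. if fst (xs!k) = a then snd (xs!k) * f (fst (xs!k)) else 0))"
    by (rule sum.swap)
  also have "\<dots> = (\<Sum>k<length xs. snd (xs!k) * f (fst (xs!k)))"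
    by (intro sum.cong refl) (simp add: sum.delta)
  finally show ?thesis .
qed




definition Pts :: "real set \<Rightarrow> real list" where
  "Pts T = (let L = sorted_list_of_set T in L @ [hd L + 1])"

locale tset =
  fixes T :: "real set"
  assumes fin: "finite T" and ne: "T \<noteq> {}" and sub: "T \<subseteq> {0..<1}"
begin

abbreviation "L \<equiv> sorted_list_of_set T"
abbreviation "N \<equiv> card T"

lemma lenL: "length L = N" by simp
lemma Npos: "N > 0" using fin ne by (simp add: card_gt_0_iff)
lemma Lne: "L \<noteq> []" using fin ne by simp

lemma Pts_len: "length (Pts T) = Suc N"
  by (simp add: Pts_def Let_def)

lemma Pts_nth_lt: "j < N \<Longrightarrow> Pts T ! j = L ! j"
  by (simp add: Pts_def Let_def nth_append)

lemma Pts_nth_N: "Pts T ! N = L ! 0 + 1"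
  using Lne by (simp add: Pts_def Let_def nth_append hd_conv_nth)

lemma L_in: "j < N \<Longrightarrow> L ! j \<in> T"
  using fin by (metis lenL nth_mem set_sorted_list_of_set)

lemma L_range: "j < N \<Longrightarrow> 0 \<le> L ! j \<and> L ! j < 1"
  using L_in[of j] sub by auto

lemma L_strict: "i < j \<Longrightarrow> j < N \<Longrightarrow> L ! i < L ! j"
  using sorted_wrt_nth_less[OF strict_sorted_list_of_set[of T]] by simp

lemma L_mono: "i \<le> j \<Longrightarrow> j < N \<Longrightarrow> L ! i \<le> L ! j"
  using L_strict by (cases "i = j") (auto simp: less_imp_le)

lemma L_exists: "a \<in> T \<Longrightarrow> \<exists>k<N. L ! k = a"
  using fin by (metis in_set_conv_nth lenL set_sorted_list_of_set)

lemma Pts_0: "Pts T ! 0 = L ! 0" using Npos Pts_nth_lt by blast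

lemma Pts_mono: "j < k \<Longrightarrow> k \<le> N \<Longrightarrow> Pts T ! j < Pts T ! k"
proof (cases "k = N")
  case True
  assume "j < k"
  then show ?thesis using True Pts_nth_lt Pts_nth_N L_range[of j] L_range[of 0] Npos by auto
next
  case False
  assume "j < k" "k \<le> N"
  then show ?thesis using False Pts_nth_lt L_strict by auto
qed

lemma Pts_mono_le: "j \<le> k \<Longrightarrow> k \<le> N \<Longrightarrow> Pts T ! j \<le> Pts T ! k"
  using Pts_mono by (cases "j = k") (auto simp: less_imp_le)

lemma Pts_frac: "j \<le> N \<Longrightarrow> frac (Pts T ! j) \<in> T"
proof (cases "j = N")
  case True
  have "frac (L ! 0 + 1) = L ! 0" using L_range[of 0] Npos by (simp add: frac_1_eq)
  then show ?thesis using True Pts_nth_N L_in[of 0] Npos by simp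
next
  case False
  assume "j \<le> N"
  then have "j < N" using False by simp
  then show ?thesis using Pts_nth_lt L_in L_range by simp
qed

lemma Pts_range: "j \<le> N \<Longrightarrow> Pts T ! 0 \<le> Pts T ! j \<and> Pts T ! j \<le> Pts T ! 0 + 1"
  using Pts_mono_le[of 0 j] Pts_mono_le[of j N] Pts_nth_N Pts_0 by auto

lemma Pts_consec:
  assumes j: "j < N" and y: "Pts T ! j < y" "y < Pts T ! Suc j"
  shows "frac y \<notin> T"
proof
  assume "frac y \<in> T"
  then obtain k where k: "k < N" "L ! k = frac y" using L_exists by blast
  show False
  proof (cases "Suc j < N")
    case True
    then have p: "Pts T ! j = L ! j" "Pts T ! Suc j = L ! Suc j" using Pts_nth_lt j by auto
    have "0 \<le> y" "y < 1" using y p L_range[of j] L_range[of "Suc j"] True j by auto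
    then have "frac y = y" by (simp add: frac_eq)
    then have "L ! j < L ! k" "L ! k < L ! Suc j" using y p k by auto
    then have "j < k" "k < Suc j" using L_mono[of k j] L_mono[of "Suc j" k] j k True
      by (meson not_le)+
    then show False by simp
  next
    case False
    then have jN: "Suc j = N" using j by simp
    then have p: "Pts T ! j = L ! j" "Pts T ! Suc j = L ! 0 + 1" using Pts_nth_lt Pts_nth_N j by auto
    show False
    proof (cases "y < 1")
      case True
      have "0 \<le> y" using y p L_range[of j] j by auto
      then have "frac y = y" using True by (simp add: frac_eq)
      then have "L ! j < L ! k" using y p k by auto
      moreover have "L ! k \<le> L ! j" using L_mono[of k j] k jN by simp
      ultimately show False by simp
    next
      case False
      have "y < 2" using y p L_range[of 0] Npos by auto
      then have "frac y = y - 1" using frac_simple[of 1 y] False by simp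
      then have "L ! k < L ! 0" using y p k by auto
      moreover have "L ! 0 \<le> L ! k" using L_mono[of 0 k] k by simp
      ultimately show False by simp
    qed
  qed
qed

lemma Pts_cover:
  assumes "Pts T ! 0 \<le> y" "y < Pts T ! 0 + 1"
  shows "\<exists>j<N. Pts T ! j \<le> y \<and> y < Pts T ! Suc j"
proof -
  define J where "J = {j. j \<le> N \<and> Pts T ! j \<le> y}"
  have finJ: "finite J" unfolding J_def by simp
  have "0 \<in> J" unfolding J_def using assms by simp
  define j where "j = Max J"
  have jJ: "j \<in> J" unfolding j_def using finJ \<open>0 \<in> J\<close> Max_in by blast
  have "j \<noteq> N" using jJ assms Pts_nth_N Pts_0 unfolding J_def by auto
  then have jN: "j < N" using jJ unfolding J_def by auto
  have "Suc j \<notin> J" using Max_ge[OF finJ] unfolding j_def by fastforce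
  then have "y < Pts T ! Suc j" using jN unfolding J_def by auto
  then show ?thesis using jN jJ unfolding J_def by auto
qed

end




definition Tx :: "nat \<Rightarrow> (nat \<Rightarrow> real) \<Rightarrow> real set" where
  "Tx n x = (\<lambda>i. antipode (x i)) ` {..<n}"

lemma tset_Tx: "n > 0 \<Longrightarrow> tset (Tx n x)"
  unfolding tset_def Tx_def antipode_def using frac_lt_1 by auto

lemma rc_points_Pts: "rc_points n x = Pts (Tx n x)"
  by (simp add: rc_points_def Pts_def Tx_def)

lemma hh_neg: "hh (- w) = hh w"
proof (cases "w \<in> \<int>")
  case True
  then have f0: "frac w = 0" "frac (-w) = 0" by (auto simp: frac_neg)
  show ?thesis unfolding hh_def f0 by simp
qed (auto simp: hh_def frac_neg min.commute)

lemma circ_dist_hh: "circ_dist z (frac w) = hh (w - z)"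
proof -
  have "circ_dist z (frac w) = hh (z - frac w)" by (simp add: circ_dist_def hh_def)
  also have "z - frac w = - (w - z) + of_int \<lfloor>w\<rfloor>" by (simp add: frac_def)
  finally show ?thesis using hh_neg[of "w - z"] by (simp add: hh_shift)
qed

lemma cost_formula:
  assumes n: "n > 0"
  shows "cost (rc n x) z = 1/4 + (\<Sum>j<card (Tx n x). EE (Pts (Tx n x) ! j - z) (Pts (Tx n x) ! Suc j - z))"
proof -
  interpret tset "Tx n x" using tset_Tx[OF n] .
  let ?P = "Pts (Tx n x)"
  have arcs: "rc_arcs n x = map (\<lambda>j. (frac ((?P ! j + ?P ! (j+1)) / 2), ?P ! (j+1) - ?P ! j)) [0..<N]"
    unfolding rc_arcs_def rc_points_Pts Let_def Pts_len by simp
  have tel: "(\<Sum>j<N. ?P ! Suc j - ?P ! j) = 1"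
    using sum_lessThan_telescope[of "\<lambda>j. ?P ! j" N] Pts_nth_N Pts_0 by simp
  have wf: "pmf_of_list_wf (rc_arcs n x)"
  proof (rule pmf_of_list_wfI)
    fix w assume "w \<in> set (map snd (rc_arcs n x))"
    then show "w \<ge> 0" unfolding arcs using Pts_mono[of _ "Suc _"] by (auto simp: less_imp_le)
  next
    have "sum_list (map snd (rc_arcs n x)) = (\<Sum>j<N. ?P ! Suc j - ?P ! j)"
      unfolding arcs by (simp add: sum_list_sum_nth atLeast0LessThan)
    then show "sum_list (map snd (rc_arcs n x)) = 1" using tel by simp
  qed
  have "cost (rc n x) z = (\<Sum>j<N. (?P ! Suc j - ?P ! j) * circ_dist z (frac ((?P ! j + ?P ! Suc j) / 2)))"
    unfolding cost_def rc_def exp_pmf_of_list[OF wf] by (simp add: arcs)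
  also have "\<dots> = (\<Sum>j<N. EE (?P ! j - z) (?P ! Suc j - z) + (HH (?P ! Suc j - z) - HH (?P ! j - z)))"
  proof (intro sum.cong refl)
    fix j
    have e: "(?P ! j + ?P ! Suc j) / 2 - z = ((?P ! j - z) + (?P ! Suc j - z)) / 2" by (simp add: field_simps)
    show "(?P ! Suc j - ?P ! j) * circ_dist z (frac ((?P ! j + ?P ! Suc j) / 2)) =
      EE (?P ! j - z) (?P ! Suc j - z) + (HH (?P ! Suc j - z) - HH (?P ! j - z))"
      unfolding circ_dist_hh e EE_def by (simp add: algebra_simps)
  qed
  also have "\<dots> = (\<Sum>j<N. EE (?P ! j - z) (?P ! Suc j - z)) + (HH (?P ! N - z) - HH (?P ! 0 - z))"
    using sum_lessThan_telescope[of "\<lambda>j. HH (?P ! j - z)" N] by (simp add: sum.distrib)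
  also have "HH (?P ! N - z) = HH (?P ! 0 - z) + 1/4"
    using HH_shift[of "?P ! 0 - z" 1] Pts_nth_N Pts_0 by (simp add: algebra_simps)
  finally show ?thesis by simp
qed

lemma gap:
  assumes ns: "\<not> on_semicircle n x" and n: "n > 0" and j: "j < card (Tx n x)"
  shows "Pts (Tx n x) ! Suc j - Pts (Tx n x) ! j < 1/2"
proof (rule ccontr)
  interpret tset "Tx n x" using tset_Tx[OF n] .
  let ?P = "Pts (Tx n x)"
  assume "\<not> ?thesis"
  then have big: "?P ! Suc j - ?P ! j \<ge> 1/2" by simp
  define c where "c = ?P ! Suc j - 1/2"
  have "\<forall>k<n. frac (x k - c) \<le> 1/2"
  proof (intro allI impI)
    fix k assume k: "k < n"
    define f where "f = frac (x k - c)"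
    have aT: "frac (x k + 1/2) \<in> Tx n x" using k unfolding Tx_def antipode_def by auto
    have "frac (?P ! Suc j + f) = frac (?P ! Suc j + (x k - c))" unfolding f_def by simp
    also have "?P ! Suc j + (x k - c) = x k + 1/2" unfolding c_def by simp
    finally have fr: "frac (?P ! Suc j + f) = frac (x k + 1/2)" .
    show "f \<le> 1/2"
    proof (rule ccontr)
      assume "\<not> f \<le> 1/2"
      define y where "y = ?P ! Suc j + f - 1"
      have "frac y = frac (x k + 1/2)"
        using fr frac_1_eq[of y] unfolding y_def by simp
      moreover have "?P ! j < y" "y < ?P ! Suc j" using big \<open>\<not> f \<le> 1/2\<close> frac_lt_1[of "x k - c"]
        unfolding y_def f_def by auto
      ultimately show False using Pts_consec[OF j, of y] aT by auto
    qed
  qed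
  then show False using ns unfolding on_semicircle_def by blast
qed




abbreviation SE :: "nat \<Rightarrow> (nat \<Rightarrow> real) \<Rightarrow> real \<Rightarrow> real" where
  "SE n x z \<equiv> (\<Sum>j<card (Tx n x). EE (Pts (Tx n x) ! j - z) (Pts (Tx n x) ! Suc j - z))"

lemma stepA:
  assumes ns: "\<not> on_semicircle n x" and i: "i < n"
  shows "SE n x (x i) \<le> 0"
    "j < card (Tx n x) \<Longrightarrow> Pts (Tx n x) ! j - x i < of_int m \<Longrightarrow> of_int m < Pts (Tx n x) ! Suc j - x i \<Longrightarrow>
      SE n x (x i) \<le> - ((min (of_int m - (Pts (Tx n x) ! j - x i)) (Pts (Tx n x) ! Suc j - x i - of_int m))^2)"
proof -
  have n: "n > 0" using i by simp
  interpret tset "Tx n x" using tset_Tx[OF n] .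
  let ?P = "Pts (Tx n x)"
  let ?z = "x i"
  let ?E = "\<lambda>j. EE (?P ! j - ?z) (?P ! Suc j - ?z)"
  have aT: "frac (?z + 1/2) \<in> Tx n x" using i unfolding Tx_def antipode_def by auto
  have trm: "?E j \<le> 0 \<and> (\<forall>m::int. ?P ! j - ?z < of_int m \<longrightarrow> of_int m < ?P ! Suc j - ?z \<longrightarrow>
      ?E j = - ((min (of_int m - (?P ! j - ?z)) (?P ! Suc j - ?z - of_int m))^2))" if j: "j < N" for j
  proof -
    have lt: "?P ! j - ?z < ?P ! Suc j - ?z" using Pts_mono[of j "Suc j"] j by simp
    have g: "(?P ! Suc j - ?z) - (?P ! j - ?z) < 1/2" using gap[OF ns n j] by simp
    have nohalf: "\<forall>m::int. \<not> (?P ! j - ?z < of_int m + 1/2 \<and> of_int m + 1/2 < ?P ! Suc j - ?z)"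
    proof (intro allI notI)
      fix m :: int
      assume h: "?P ! j - ?z < of_int m + 1/2 \<and> of_int m + 1/2 < ?P ! Suc j - ?z"
      define y where "y = (?z + 1/2) + of_int m"
      have "frac y = frac (?z + 1/2)" unfolding y_def by simp
      moreover have "?P ! j < y" "y < ?P ! Suc j" using h unfolding y_def by auto
      ultimately show False using Pts_consec[OF j, of y] aT by auto
    qed
    show ?thesis
    proof (cases "\<exists>m::int. ?P ! j - ?z < of_int m \<and> of_int m < ?P ! Suc j - ?z")
      case True
      then obtain m0 :: int where m0: "?P ! j - ?z < of_int m0" "of_int m0 < ?P ! Suc j - ?z" by blast
      have all: "?E j = - ((min (of_int m - (?P ! j - ?z)) (?P ! Suc j - ?z - of_int m))^2)"
        if "?P ! j - ?z < of_int m" "of_int m < ?P ! Suc j - ?z" for m :: int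
        using L1_gen[OF that g] .
      show ?thesis using all[OF m0] all by auto
    next
      case False
      then have "?E j = 0" using noint_gen(2)[OF lt _ nohalf] by blast
      then show ?thesis using False by auto
    qed
  qed
  show "SE n x ?z \<le> 0" using trm by (intro sum_nonpos) auto
  assume j: "j < N" and m: "?P ! j - ?z < of_int m" "of_int m < ?P ! Suc j - ?z"
  have "SE n x ?z = ?E j + (\<Sum>k\<in>{..<N} - {j}. ?E k)"
    using j by (subst sum.remove[of _ j]) auto
  also have "(\<Sum>k\<in>{..<N} - {j}. ?E k) \<le> 0" using trm by (intro sum_nonpos) auto
  finally show "SE n x ?z \<le> - ((min (of_int m - (?P ! j - ?z)) (?P ! Suc j - ?z - of_int m))^2)"
    using trm[OF j] m by auto
qed

lemma stepB:
  assumes ns: "\<not> on_semicircle n x" and n: "n > 0"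
  shows "SE n x z \<ge> 0 \<or> (\<exists>j<card (Tx n x). \<exists>m::int. Pts (Tx n x) ! j - z < of_int m \<and> of_int m < Pts (Tx n x) ! Suc j - z \<and>
      SE n x z \<ge> - ((min (of_int m - (Pts (Tx n x) ! j - z)) (Pts (Tx n x) ! Suc j - z - of_int m))^2))"
proof -
  interpret tset "Tx n x" using tset_Tx[OF n] .
  let ?P = "Pts (Tx n x)"
  let ?E = "\<lambda>j. EE (?P ! j - z) (?P ! Suc j - z)"
  let ?I = "\<lambda>j. \<exists>m::int. ?P ! j - z < of_int m \<and> of_int m < ?P ! Suc j - z"
  have noI: "?E j \<ge> 0" if "j < N" "\<not> ?I j" for j
  proof -
    have lt: "?P ! j - z < ?P ! Suc j - z" using Pts_mono[of j "Suc j"] that by simp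
    show ?thesis using noint_gen(1)[OF lt] that(2) by blast
  qed
  have uniq: "k1 = k2" if k: "k1 < N" "k2 < N" "?I k1" "?I k2" for k1 k2
  proof (rule ccontr)
    assume ne: "k1 \<noteq> k2"
    have key: False if a: "a < N" "b < N" "a < b" "?I a" "?I b" for a b
    proof -
      obtain m1 :: int where m1: "?P ! a - z < of_int m1" "of_int m1 < ?P ! Suc a - z" using a by blast
      obtain m2 :: int where m2: "?P ! b - z < of_int m2" "of_int m2 < ?P ! Suc b - z" using a by blast
      have "?P ! Suc a \<le> ?P ! b" using Pts_mono_le[of "Suc a" b] a by simp
      then have "of_int m1 < (of_int m2 :: real)" using m1 m2 by simp
      then have "of_int m1 + 1 \<le> (of_int m2 :: real)" by (simp del: of_int_add add: of_int_add[symmetric])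
      moreover have "?P ! 0 \<le> ?P ! a" "?P ! Suc b \<le> ?P ! 0 + 1" using Pts_range[of a] Pts_range[of "Suc b"] a by auto
      ultimately show False using m1 m2 by linarith
    qed
    show False using ne key[of k1 k2] key[of k2 k1] k by (cases "k1 < k2") auto
  qed
  show ?thesis
  proof (cases "\<exists>j<N. ?I j")
    case False
    then have "SE n x z \<ge> 0" using noI by (intro sum_nonneg) auto
    then show ?thesis by simp
  next
    case True
    then obtain j m where j: "j < N" and m: "?P ! j - z < of_int m" "of_int m < ?P ! Suc j - z" by blast
    have g: "(?P ! Suc j - z) - (?P ! j - z) < 1/2" using gap[OF ns n j] by simp
    have "SE n x z = ?E j + (\<Sum>k\<in>{..<N} - {j}. ?E k)"
      using j by (subst sum.remove[of _ j]) auto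
    moreover have "(\<Sum>k\<in>{..<N} - {j}. ?E k) \<ge> 0"
    proof (intro sum_nonneg)
      fix k assume "k \<in> {..<N} - {j}"
      then show "?E k \<ge> 0" using noI[of k] uniq[of k j] j m by blast
    qed
    moreover have "?E j = - ((min (of_int m - (?P ! j - z)) (?P ! Suc j - z - of_int m))^2)"
      using L1_gen[OF m g] .
    ultimately have "SE n x z \<ge> - ((min (of_int m - (?P ! j - z)) (?P ! Suc j - z - of_int m))^2)"
      by linarith
    then show ?thesis using j m by blast
  qed
qed




lemma half_apart:
  fixes a w z :: real
  assumes "a = z + of_int m1" "w = z + 1/2 + of_int m2"
  shows "\<bar>a - w\<bar> \<ge> 1/2"
proof -
  have e: "a - w = of_int (m1 - m2) - 1/2" using assms by simp
  show ?thesis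
  proof (cases "m1 - m2 \<le> 0")
    case True
    then have "(of_int (m1 - m2) :: real) \<le> 0" by simp
    then show ?thesis unfolding e by linarith
  next
    case False
    then have "(of_int (m1 - m2) :: real) \<ge> 1" by simp
    then show ?thesis unfolding e by linarith
  qed
qed

lemma frac_half_ne: "frac (w + 1/2) \<noteq> frac (w::real)"
proof
  assume "frac (w + 1/2) = frac w"
  then obtain m where "w + 1/2 = w + of_int m" by (rule frac_eqE)
  then have "(of_int m :: real) = 1/2" by simp
  then have "(of_int (2*m) :: real) = 1" by simp
  then have "2 * m = 1" by (metis of_int_eq_1_iff)
  then show False by presburger
qed

lemma in_Tx: "y \<in> Tx n x \<Longrightarrow> \<exists>l<n. y = frac (x l + 1/2)"
  unfolding Tx_def antipode_def by auto

lemma in_Tx': "l < n \<Longrightarrow> l \<noteq> i \<Longrightarrow> frac (x l + 1/2) \<in> Tx n (x(i := v))"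
  unfolding Tx_def antipode_def by force

theorem mainTheorem17:
  fixes n :: nat and x :: "nat \<Rightarrow> real" and i :: nat and xi' :: real
  assumes "\<not> on_semicircle n x"
    and "i < n"
    and "\<not> on_semicircle n (x(i := xi'))"
  shows "cost (rc n x) (x i) \<le> cost (rc n (x(i := xi'))) (x i)"
proof -
  note ns = assms(1) and i = assms(2) and ns' = assms(3)
  have n: "n > 0" using i by simp
  define x' where "x' = x(i := xi')"
  define z where "z = x i"
  interpret A: tset "Tx n x" using tset_Tx[OF n] .
  interpret B: tset "Tx n x'" using tset_Tx[OF n] .
  let ?P = "Pts (Tx n x)"
  let ?Q = "Pts (Tx n x')"
  have c1: "cost (rc n x) z = 1/4 + SE n x z" by (rule cost_formula[OF n])
  have c2: "cost (rc n x') z = 1/4 + SE n x' z" by (rule cost_formula[OF n])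
  have A1: "SE n x z \<le> 0" using stepA(1)[OF ns i] unfolding z_def .
  have "SE n x z \<le> SE n x' z"
  proof -
    from stepB[OF ns'[folded x'_def] n, of z]
    consider "SE n x' z \<ge> 0" | k m' where "k < card (Tx n x')" "?Q ! k - z < of_int m'" "of_int m' < ?Q ! Suc k - z"
      "SE n x' z \<ge> - ((min (of_int m' - (?Q ! k - z)) (?Q ! Suc k - z - of_int m'))^2)"
      by blast
    then show ?thesis
    proof cases
      case 1 then show ?thesis using A1 by linarith
    next
      case 2
      note k = 2(1) and mk = 2(2,3) and SEB = 2(4)
      define c' where "c' = z + of_int m'"
      have pc: "?Q ! k < c'" "c' < ?Q ! Suc k" using mk unfolding c'_def by auto
      have fz: "frac z \<notin> Tx n x"
      proof
        assume "frac z \<in> Tx n x"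
        then obtain l where l: "l < n" "frac z = frac (x l + 1/2)" using in_Tx by blast
        have "l \<noteq> i" using l frac_half_ne[of z] unfolding z_def by auto
        then have "frac z \<in> Tx n x'" using in_Tx'[OF l(1)] l(2) unfolding x'_def by simp
        moreover have "frac c' = frac z" unfolding c'_def by simp
        ultimately show False using B.Pts_consec[OF k pc] by simp
      qed
      define y where "y = ?P ! 0 + frac (c' - ?P ! 0)"
      define M where "M = m' - \<lfloor>c' - ?P ! 0\<rfloor>"
      have yM: "y = z + of_int M" unfolding y_def M_def c'_def frac_def by simp
      have yr: "?P ! 0 \<le> y" "y < ?P ! 0 + 1" unfolding y_def using frac_lt_1 by auto
      obtain j where j: "j < card (Tx n x)" "?P ! j \<le> y" "y < ?P ! Suc j" using A.Pts_cover[OF yr] by blast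
      have fy: "frac y = frac z" unfolding yM by simp
      have "?P ! j \<noteq> y" using A.Pts_frac[of j] j fz fy by auto
      then have pj: "?P ! j < y" using j by simp
      have SEA: "SE n x z \<le> - ((min (of_int M - (?P ! j - z)) (?P ! Suc j - z - of_int M))^2)"
        using stepA(2)[OF ns i j(1), of M] pj j(3) unfolding yM z_def by auto
      have g: "?P ! Suc j - ?P ! j < 1/2" using gap[OF ns n j(1)] .
      define D where "D = M - m'"
      have yc: "y - c' = of_int D" unfolding D_def yM c'_def by simp
      have notI: "frac w \<in> Tx n x'" if w: "frac w \<in> Tx n x" "\<bar>y - w\<bar> < 1/2" for w
      proof -
        obtain l where l: "l < n" "frac w = frac (x l + 1/2)" using in_Tx w(1) by blast
        have "l \<noteq> i"
        proof
          assume "l = i"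
          then have "frac w = frac (z + 1/2)" using l unfolding z_def by simp
          then obtain b where "w = z + 1/2 + of_int b" by (rule frac_eqE)
          then show False using half_apart[OF yM, of w b] w(2) by linarith
        qed
        then show ?thesis using in_Tx'[OF l(1)] l(2) unfolding x'_def by simp
      qed
      have cl1: "?P ! j - of_int D \<le> ?Q ! k"
      proof (rule ccontr)
        assume "\<not> ?thesis"
        then have "?Q ! k < ?P ! j - of_int D" by simp
        moreover have "?P ! j - of_int D < ?Q ! Suc k" using pj yc pc by linarith
        moreover have "frac (?P ! j - of_int D) \<in> Tx n x'"
        proof -
          have "frac (?P ! j) \<in> Tx n x'" using notI[of "?P ! j"] A.Pts_frac[of j] j pj g by auto
          moreover have "frac (?P ! j - of_int D) = frac (?P ! j)"
            using frac_add_of_int_right[of "?P ! j" "- D"] by simp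
          ultimately show ?thesis by simp
        qed
        ultimately show False using B.Pts_consec[OF k] by blast
      qed
      have cl2: "?Q ! Suc k \<le> ?P ! Suc j - of_int D"
      proof (rule ccontr)
        assume "\<not> ?thesis"
        then have "?P ! Suc j - of_int D < ?Q ! Suc k" by simp
        moreover have "?Q ! k < ?P ! Suc j - of_int D" using j(3) yc pc by linarith
        moreover have "frac (?P ! Suc j - of_int D) \<in> Tx n x'"
        proof -
          have "frac (?P ! Suc j) \<in> Tx n x'" using notI[of "?P ! Suc j"] A.Pts_frac[of "Suc j"] j pj g by auto
          moreover have "frac (?P ! Suc j - of_int D) = frac (?P ! Suc j)"
            using frac_add_of_int_right[of "?P ! Suc j" "- D"] by simp
          ultimately show ?thesis by simp
        qed
        ultimately show False using B.Pts_consec[OF k] by blast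
      qed
      define a where "a = min (of_int m' - (?Q ! k - z)) (?Q ! Suc k - z - of_int m')"
      define b where "b = min (of_int M - (?P ! j - z)) (?P ! Suc j - z - of_int M)"
      have a0: "0 \<le> a" unfolding a_def using mk by simp
      have ab: "a \<le> b" unfolding a_def b_def using cl1 cl2 yc unfolding yM c'_def D_def
        by (intro min.mono) (simp_all add: algebra_simps)
      have "a^2 \<le> b^2" using ab a0 by (rule power_mono)
      then show ?thesis using SEA SEB unfolding a_def[symmetric] b_def[symmetric] by linarith
    qed
  qed
  then show ?thesis using c1 c2 unfolding x'_def z_def by simp
qed


end
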